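(* Let $d\in\mathbb{N}$ and $M(t)=t\log(e+t)$, $t>0$. For every measurable $f$ on $\mathbb{R}^d\setminus\mathbb{B}^d$, $$\|f\|_{L_M(\mathbb{R}^d\setminus\mathbb{B}^d)}\leq\|Vf\|_{L_M(\mathbb{B}^d)}.$$
   Context: $\mathbb{B}^d$ is the unit ball in $\mathbb{R}^d$; all spaces carry Lebesgue measure. $(Vf)(t)=|t|^{-2d}f(t/|t|^2)$. For a measurable set $\Omega$, $\|g\|_{L_M(\Omega)}=\inf\{\lambda>0:\int_\Omega M(|g|/\lambda)\le1\}$. *)

theory Defs
  imports "HOL-Analysis.Analysis"
begin

definition orlicz_M :: "real \<Rightarrow> real" where
  "orlicz_M t = t * ln (exp 1 + t)"

text \<open>Luxemburg norm on a measurable set, with values in [0, \<infinity>] (inf of empty set = \<infinity>).\<close>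
definition luxemburg_norm :: "(real \<Rightarrow> real) \<Rightarrow> 'a::euclidean_space set \<Rightarrow> ('a \<Rightarrow> real) \<Rightarrow> ennreal" where
  "luxemburg_norm M \<Omega> g =
     Inf {ennreal l | l. l > 0 \<and> (\<integral>\<^sup>+ x \<in> \<Omega>. ennreal (M (\<bar>g x\<bar> / l)) \<partial>lebesgue) \<le> 1}"

definition kelvinV :: "('a::euclidean_space \<Rightarrow> real) \<Rightarrow> 'a \<Rightarrow> real" where
  "kelvinV f t = norm t powr (- 2 * real DIM('a)) * f ((1 / (norm t)\<^sup>2) *\<^sub>R t)"

end

theory Submission
  imports Defs
begin

typedef (overloaded) ('a::euclidean_space) bidx = "Basis :: 'a set"
  using nonempty_Basis by blast

lemma finite_bidx: "finite (UNIV :: 'a::euclidean_space bidx set)"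
proof -
  have "UNIV = Abs_bidx ` (Basis :: 'a set)"
    using type_definition.Abs_image[OF type_definition_bidx] by metis
  then show ?thesis by (metis finite_Basis finite_imageI)
qed

instance bidx :: (euclidean_space) finite
  by standard (rule finite_bidx)

definition bidx_nat :: "'a::euclidean_space bidx \<Rightarrow> nat" where
  "bidx_nat = (SOME f. inj f)"

lemma inj_bidx_nat: "inj (bidx_nat :: 'a::euclidean_space bidx \<Rightarrow> nat)"
proof -
  obtain f :: "'a bidx \<Rightarrow> nat" where "inj_on f UNIV"
    using countable_finite[OF finite_bidx] by (rule countableE)
  then have "inj f" by simp
  then show ?thesis unfolding bidx_nat_def by (metis someI_ex)
qed

instantiation bidx :: (euclidean_space) linorder
begin
definition "less_eq_bidx (x::'a bidx) (y::'a bidx) \<longleftrightarrow> bidx_nat x \<le> bidx_nat y"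
definition "less_bidx (x::'a bidx) (y::'a bidx) \<longleftrightarrow> bidx_nat x < bidx_nat y"
instance
  proof
  fix x y z :: "'a bidx"
  show "(x < y) = (x \<le> y \<and> \<not> y \<le> x)" by (auto simp: less_eq_bidx_def less_bidx_def)
  show "x \<le> x" by (simp add: less_eq_bidx_def)
  show "x \<le> y \<Longrightarrow> y \<le> z \<Longrightarrow> x \<le> z" by (simp add: less_eq_bidx_def)
  show "x \<le> y \<Longrightarrow> y \<le> x \<Longrightarrow> x = y" by (simp add: less_eq_bidx_def inj_eq[OF inj_bidx_nat])
  show "x \<le> y \<or> y \<le> x" by (simp add: less_eq_bidx_def nat_le_linear)
qed
end

instance bidx :: (euclidean_space) wellorder
proof
  fix P :: "'a bidx \<Rightarrow> bool" and a
  assume H: "\<And>x. (\<And>y. y < x \<Longrightarrow> P y) \<Longrightarrow> P x"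
  show "P a"
    by (induction a rule: measure_induct_rule[of bidx_nat]) (rule H, simp add: less_bidx_def)
qed

lemma lb_inner_basis:
  fixes L :: "'a::euclidean_space \<Rightarrow> 'b::euclidean_space"
  assumes lin: "linear L" and bij: "bij_betw L Basis Basis" and b: "b \<in> Basis"
  shows "L x \<bullet> L b = x \<bullet> b"
proof -
  have inj: "inj_on L Basis" using bij by (simp add: bij_betw_def)
  have LB: "\<And>c. c \<in> Basis \<Longrightarrow> L c \<in> Basis" using bij by (auto simp: bij_betw_def)
  have "L x = L (\<Sum>c\<in>Basis. (x \<bullet> c) *\<^sub>R c)" by (simp add: euclidean_representation)
  also have "\<dots> = (\<Sum>c\<in>Basis. (x \<bullet> c) *\<^sub>R L c)"
    using lin by (simp add: linear_sum linear_scale)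
  finally have "L x \<bullet> L b = (\<Sum>c\<in>Basis. (x \<bullet> c) * (L c \<bullet> L b))"
    by (simp add: inner_sum_left)
  also have "\<dots> = (\<Sum>c\<in>Basis. if c = b then x \<bullet> c else 0)"
  proof (rule sum.cong)
    fix c :: 'a assume c: "c \<in> Basis"
    show "(x \<bullet> c) * (L c \<bullet> L b) = (if c = b then x \<bullet> c else 0)"
      using inner_Basis[OF LB[OF c] LB[OF b]] inj_onD[OF inj _ c b] by auto
  qed simp
  also have "\<dots> = x \<bullet> b" using b by simp
  finally show ?thesis .
qed

lemma lb_inner:
  fixes L :: "'a::euclidean_space \<Rightarrow> 'b::euclidean_space"
  assumes lin: "linear L" and bij: "bij_betw L Basis Basis"
  shows "L x \<bullet> L y = x \<bullet> y"
proof -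
  have "L x \<bullet> L y = (\<Sum>b'\<in>Basis. (L x \<bullet> b') * (L y \<bullet> b'))" by (rule euclidean_inner)
  also have "\<dots> = (\<Sum>b\<in>Basis. (L x \<bullet> L b) * (L y \<bullet> L b))"
    using sum.reindex_bij_betw[OF bij, of "\<lambda>b'. (L x \<bullet> b') * (L y \<bullet> b')"] by simp
  also have "\<dots> = (\<Sum>b\<in>Basis. (x \<bullet> b) * (y \<bullet> b))"
    using lb_inner_basis[OF lin bij] by simp
  also have "\<dots> = x \<bullet> y" by (rule euclidean_inner[symmetric])
  finally show ?thesis .
qed

lemma lb_norm:
  fixes L :: "'a::euclidean_space \<Rightarrow> 'b::euclidean_space"
  assumes lin: "linear L" and bij: "bij_betw L Basis Basis"
  shows "norm (L x) = norm x"
  using lb_inner[OF lin bij, of x x] by (simp add: norm_eq_sqrt_inner)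

lemma lb_borel:
  fixes L :: "'a::euclidean_space \<Rightarrow> 'b::euclidean_space"
  assumes lin: "linear L"
  shows "L \<in> borel_measurable borel"
  by (intro borel_measurable_continuous_onI linear_continuous_on linear_conv_bounded_linear[THEN iffD1] lin)

lemma lb_lborel:
  fixes L :: "'a::euclidean_space \<Rightarrow> 'b::euclidean_space"
  assumes lin: "linear L" and bij: "bij_betw L Basis Basis"
  shows "distr lborel borel L = lborel"
proof (rule lborel_eqI[symmetric])
  show "sets (distr lborel borel L) = sets borel" by simp
  fix l u :: 'b
  assume lu: "\<And>b. b \<in> Basis \<Longrightarrow> l \<bullet> b \<le> u \<bullet> b"
  define l' :: 'a where "l' = (\<Sum>b\<in>Basis. (l \<bullet> L b) *\<^sub>R b)"
  define u' :: 'a where "u' = (\<Sum>b\<in>Basis. (u \<bullet> L b) *\<^sub>R b)"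
  have LB: "\<And>c. c \<in> Basis \<Longrightarrow> L c \<in> Basis" using bij by (auto simp: bij_betw_def)
  have l'b: "l' \<bullet> b = l \<bullet> L b" if "b \<in> Basis" for b
    using that unfolding l'_def by (simp add: inner_sum_left inner_Basis if_distrib cong: if_cong)
  have u'b: "u' \<bullet> b = u \<bullet> L b" if "b \<in> Basis" for b
    using that unfolding u'_def by (simp add: inner_sum_left inner_Basis if_distrib cong: if_cong)
  have pre: "L -` box l u = box l' u'"
  proof -
    have "L x \<in> box l u \<longleftrightarrow> (\<forall>b\<in>Basis. l \<bullet> L b < L x \<bullet> L b \<and> L x \<bullet> L b < u \<bullet> L b)" for x
    proof -
      have "L x \<in> box l u \<longleftrightarrow> (\<forall>b'\<in>L ` Basis. l \<bullet> b' < L x \<bullet> b' \<and> L x \<bullet> b' < u \<bullet> b')"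
        using bij by (simp add: mem_box bij_betw_def)
      then show ?thesis by simp
    qed
    then show ?thesis
      by (auto simp: mem_box l'b u'b lb_inner_basis[OF lin bij])
  qed
  have "emeasure (distr lborel borel L) (box l u) = emeasure lborel (L -` box l u)"
    by (simp add: emeasure_distr lb_borel[OF lin])
  also have "\<dots> = (\<Prod>b\<in>Basis. (u' - l') \<bullet> b)"
    unfolding pre by (rule emeasure_lborel_box) (simp add: l'b u'b lu LB)
  also have "\<dots> = (\<Prod>b\<in>Basis. (u - l) \<bullet> L b)"
    by (intro arg_cong[where f=ennreal] prod.cong) (simp_all add: inner_diff_left l'b u'b)
  also have "\<dots> = (\<Prod>b'\<in>Basis. (u - l) \<bullet> b')"
    using prod.reindex_bij_betw[OF bij, of "\<lambda>b'. (u - l) \<bullet> b'"] by simp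
  finally show "emeasure (distr lborel borel L) (box l u) = (\<Prod>b'\<in>Basis. (u - l) \<bullet> b')" .
qed

lemma lb_lebesgue:
  fixes L :: "'a::euclidean_space \<Rightarrow> 'b::euclidean_space"
  assumes lin: "linear L" and bij: "bij_betw L Basis Basis"
  shows "L \<in> lebesgue \<rightarrow>\<^sub>M lebesgue" and "distr lebesgue lebesgue L = lebesgue"
proof -
  have Lb: "L \<in> lborel \<rightarrow>\<^sub>M lborel" using lb_borel[OF lin] by simp
  have eq1: "distr lebesgue lborel L = (lborel :: 'b measure)"
  proof -
    have "distr lebesgue lborel L = distr lborel lborel L" by (rule distr_completion[OF Lb])
    also have "\<dots> = distr lborel borel L" by (rule distr_cong) auto
    also have "\<dots> = lborel" by (rule lb_lborel[OF lin bij])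
    finally show ?thesis .
  qed
  have Lc: "L \<in> lebesgue \<rightarrow>\<^sub>M lborel" using Lb by (rule measurable_completion)
  show meas: "L \<in> lebesgue \<rightarrow>\<^sub>M lebesgue"
    by (rule completion.measurable_completion2[OF Lc]) (simp add: eq1)
  have "completion (distr lebesgue lborel L) = distr lebesgue (completion lborel) L"
    by (rule completion.completion_distr_eq[OF Lc]) (simp add: eq1)
  then show "distr lebesgue lebesgue L = lebesgue" by (simp add: eq1)
qed

definition phi :: "real ^ ('a::euclidean_space bidx) \<Rightarrow> 'a" where
  "phi x = (\<Sum>i\<in>UNIV. (x $ i) *\<^sub>R Rep_bidx i)"

definition psi :: "'a::euclidean_space \<Rightarrow> real ^ ('a bidx)" where
  "psi y = (\<chi> i. y \<bullet> Rep_bidx i)"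

lemma Rep_bidx_Basis: "Rep_bidx i \<in> Basis"
  using Rep_bidx by blast

lemma Rep_bidx_image: "range Rep_bidx = (Basis :: 'a::euclidean_space set)"
  using type_definition.Rep_range[OF type_definition_bidx] by simp

lemma inj_Rep_bidx: "inj Rep_bidx"
  by (meson Rep_bidx_inject injI)

lemma linear_phi: "linear (phi :: real ^ ('a::euclidean_space bidx) \<Rightarrow> 'a)"
  unfolding phi_def by (intro linearI) (simp_all add: scaleR_add_left sum.distrib scaleR_sum_right)

lemma linear_psi: "linear (psi :: 'a::euclidean_space \<Rightarrow> _)"
  unfolding psi_def by (intro linearI) (simp_all add: inner_add_left vec_eq_iff)

lemma phi_psi: "phi (psi y) = (y::'a::euclidean_space)"
proof -
  have "phi (psi y) = (\<Sum>i\<in>UNIV. (y \<bullet> Rep_bidx i) *\<^sub>R Rep_bidx i)"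
    by (simp add: phi_def psi_def)
  also have "\<dots> = (\<Sum>b\<in>Basis. (y \<bullet> b) *\<^sub>R b)"
    using sum.reindex[OF inj_Rep_bidx, of "\<lambda>b. (y \<bullet> b) *\<^sub>R b"]
    by (simp add: comp_def Rep_bidx_image)
  also have "\<dots> = y" by (rule euclidean_representation)
  finally show ?thesis .
qed

lemma psi_phi: "psi (phi x) = (x :: real ^ ('a::euclidean_space bidx))"
proof -
  have "phi x \<bullet> Rep_bidx j = x $ j" for j :: "'a bidx"
  proof -
    have "phi x \<bullet> Rep_bidx j = (\<Sum>i\<in>UNIV. x $ i * (Rep_bidx i \<bullet> Rep_bidx j))"
      by (simp add: phi_def inner_sum_left)
    also have "\<dots> = (\<Sum>i\<in>UNIV. if i = j then x $ i else 0)"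
      by (intro sum.cong refl) (auto simp: inner_Basis Rep_bidx_Basis Rep_bidx_inject)
    also have "\<dots> = x $ j" by simp
    finally show ?thesis .
  qed
  then show ?thesis by (simp add: psi_def vec_eq_iff)
qed

lemma Basis_vec_real: "(Basis :: (real ^ 'n) set) = range (\<lambda>i. axis i 1)"
  by (auto simp: Basis_vec_def)

lemma phi_axis: "phi (axis i 1 :: real ^ ('a::euclidean_space bidx)) = Rep_bidx i"
proof -
  have "phi (axis i 1 :: real ^ ('a bidx)) = (\<Sum>j\<in>UNIV. if j = i then Rep_bidx j else 0)"
    unfolding phi_def by (intro sum.cong refl) (simp add: axis_def)
  then show ?thesis by simp
qed

lemma bij_phi: "bij_betw (phi :: real ^ ('a::euclidean_space bidx) \<Rightarrow> 'a) Basis Basis"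
proof -
  have inj: "inj (phi :: real ^ ('a bidx) \<Rightarrow> 'a)" by (metis injI psi_phi)
  have "phi ` (Basis :: (real ^ ('a bidx)) set) = range (\<lambda>i. phi (axis i 1 :: real ^ ('a bidx)))"
    by (simp add: Basis_vec_real image_image)
  also have "\<dots> = Basis" by (simp add: phi_axis Rep_bidx_image)
  finally show ?thesis using inj_on_subset[OF inj subset_UNIV] by (simp add: bij_betw_def)
qed

lemma bij_psi: "bij_betw (psi :: 'a::euclidean_space \<Rightarrow> _) Basis Basis"
proof -
  have eq: "(Basis :: 'a set) = phi ` (Basis :: (real ^ ('a bidx)) set)"
    using bij_betw_imp_surj_on[OF bij_phi[where 'a='a]] by simp
  have inj: "inj (psi :: 'a \<Rightarrow> _)" by (metis injI phi_psi)
  show ?thesis unfolding eq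
    by (rule bij_betw_imageI) (rule inj_on_subset[OF inj subset_UNIV], simp add: image_image psi_phi)
qed

lemma norm_phi: "norm (phi x) = norm x"
  by (rule lb_norm[OF linear_phi bij_phi])

lemma norm_psi: "norm (psi x) = norm x"
  by (rule lb_norm[OF linear_psi bij_psi])

definition inv0 :: "'a::real_inner \<Rightarrow> 'a" where
  "inv0 x = (1 / (norm x)\<^sup>2) *\<^sub>R x"

lemma norm_inv0: "norm (inv0 x) = 1 / norm x"
  by (cases "x = 0") (simp_all add: inv0_def power2_eq_square)

lemma inv0_inv0: "inv0 (inv0 x) = x"
  by (cases "x = 0") (simp_all add: inv0_def norm_inv0 power2_eq_square)

lemma inv0_zero_iff: "inv0 x = 0 \<longleftrightarrow> x = 0"
  by (simp add: inv0_def)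

definition Dinv :: "'a::real_inner \<Rightarrow> 'a \<Rightarrow> 'a" where
  "Dinv x = (\<lambda>h. (1 / (norm x)\<^sup>2) *\<^sub>R (h - (2 * (x \<bullet> h) / (norm x)\<^sup>2) *\<^sub>R x))"

lemma inv0_has_derivative:
  fixes x :: "'a::real_inner"
  assumes x: "x \<noteq> 0"
  shows "(inv0 has_derivative Dinv x) (at x within S)"
proof -
  have eq: "inv0 = (\<lambda>y. inverse (y \<bullet> y) *\<^sub>R y)"
    by (auto simp: inv0_def fun_eq_iff power2_norm_eq_inner divide_inverse)
  have xx: "x \<bullet> x \<noteq> 0" using x by simp
  have d1: "((\<lambda>y. y \<bullet> y) has_derivative (\<lambda>h. 2 * (x \<bullet> h))) (at x within S)"
    by (rule has_derivative_eq_rhs[OF has_derivative_inner[OF has_derivative_ident has_derivative_ident]])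
       (auto simp: fun_eq_iff inner_commute)
  note d2 = has_derivative_scaleR[OF Deriv.has_derivative_inverse[OF xx d1] has_derivative_ident]
  show ?thesis unfolding eq
    apply (rule has_derivative_eq_rhs[OF d2])
    using xx
    apply (auto simp: Dinv_def fun_eq_iff power2_norm_eq_inner field_simps inner_commute scaleR_diff_right)
    done
qed

lemma Dinv_scale: "Dinv x = (\<lambda>h. (1 / (norm x)\<^sup>2) *\<^sub>R h) \<circ> (\<lambda>h. h - (2 * (x \<bullet> h) / (norm x)\<^sup>2) *\<^sub>R x)"
  by (simp add: Dinv_def fun_eq_iff)

lemma orth_refl:
  fixes x :: "'a::real_inner"
  assumes x: "x \<noteq> 0"
  shows "orthogonal_transformation (\<lambda>h. h - (2 * (x \<bullet> h) / (norm x)\<^sup>2) *\<^sub>R x)"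
  unfolding orthogonal_transformation_def
proof
  show "linear (\<lambda>h. h - (2 * (x \<bullet> h) / (norm x)\<^sup>2) *\<^sub>R x)"
    by (intro linearI) (simp_all add: inner_add_right add_divide_distrib scaleR_add_left algebra_simps)
  have nx: "(norm x)\<^sup>2 = x \<bullet> x" by (simp add: power2_norm_eq_inner)
  have xx: "x \<bullet> x \<noteq> 0" using x by simp
  show "\<forall>v w. (v - (2 * (x \<bullet> v) / (norm x)\<^sup>2) *\<^sub>R x) \<bullet> (w - (2 * (x \<bullet> w) / (norm x)\<^sup>2) *\<^sub>R x) = v \<bullet> w"
    using xx by (simp add: nx inner_diff_left inner_diff_right inner_commute field_simps)
qed

lemma pow_powr_helper:
  fixes r :: real
  assumes "r > 0"
  shows "(1 / r\<^sup>2) ^ n = r powr (- 2 * real n)"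
proof -
  have "r powr (- 2 * real n) = inverse (r powr (real (2 * n)))"
    by (simp add: powr_minus[symmetric])
  also have "\<dots> = inverse (r ^ (2 * n))" using assms by (simp only: powr_realpow)
  also have "\<dots> = (1 / r\<^sup>2) ^ n" by (simp add: power_mult power_one_over divide_inverse power_inverse)
  finally show ?thesis by simp
qed

lemma det_Dinv:
  fixes x :: "real ^ 'n"
  assumes x: "x \<noteq> 0"
  shows "\<bar>det (matrix (Dinv x))\<bar> = norm x powr (- 2 * real CARD('n))"
proof -
  let ?R = "\<lambda>h::real^'n. h - (2 * (x \<bullet> h) / (norm x)\<^sup>2) *\<^sub>R x"
  have oR: "orthogonal_transformation ?R" by (rule orth_refl[OF x])
  have lR: "linear ?R" using oR by (simp add: orthogonal_transformation_def)
  have lS: "linear (\<lambda>h::real^'n. (1 / (norm x)\<^sup>2) *\<^sub>R h)" by (simp add: linear_scaleR)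
  have "matrix (Dinv x) = matrix (\<lambda>h::real^'n. (1 / (norm x)\<^sup>2) *\<^sub>R h) ** matrix ?R"
    unfolding Dinv_scale by (rule matrix_compose[OF lR lS])
  then have "\<bar>det (matrix (Dinv x))\<bar> = \<bar>(1 / (norm x)\<^sup>2) ^ CARD('n)\<bar> * \<bar>det (matrix ?R)\<bar>"
    by (simp add: det_mul abs_mult)
  also have "\<dots> = (1 / (norm x)\<^sup>2) ^ CARD('n)" using oR by simp
  also have "\<dots> = norm x powr (- 2 * real CARD('n))"
    by (rule pow_powr_helper) (use x in simp)
  finally show ?thesis .
qed

lemma int_ind_ball: "integrable lebesgue (\<lambda>x::'a::euclidean_space. c * indicat_real (ball 0 r) x)"
proof -
  have fm: "ball (0::'a) r \<in> fmeasurable lebesgue" by simp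
  have "emeasure lebesgue (ball (0::'a) r) < \<infinity>"
    using fmeasurableD2[OF fm] unfolding infinity_ennreal_def by (rule less_top[THEN iffD1])
  then have "integrable lebesgue (indicat_real (ball (0::'a) r))"
    by (rule integrable_real_indicator[OF fmeasurableD[OF fm]])
  then show ?thesis by (rule Bochner_Integration.integrable_mult_right[where c=c, OF])
qed

lemma int_bounded_ball:
  fixes g :: "'a::euclidean_space \<Rightarrow> real"
  assumes "g \<in> borel_measurable lebesgue" "\<And>x. 0 \<le> g x" "\<And>x. g x \<le> c * indicator (ball 0 r) x"
  shows "integrable lebesgue g"
proof (rule Bochner_Integration.integrable_bound[OF int_ind_ball[of c r] assms(1)])
  show "AE x in lebesgue. norm (g x) \<le> norm (c * indicat_real (ball 0 r) x)"
  proof (rule AE_I2)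
    fix x
    have "norm (g x) = g x" using assms(2) by simp
    also have "\<dots> \<le> c * indicat_real (ball 0 r) x" by (rule assms(3))
    also have "\<dots> \<le> norm (c * indicat_real (ball 0 r) x)" by (simp only: real_norm_def abs_ge_self)
    finally show "norm (g x) \<le> norm (c * indicat_real (ball 0 r) x)" .
  qed
qed

lemma hk_eventually:
  fixes h :: "'a::real_normed_vector \<Rightarrow> real"
  shows "\<exists>N. \<forall>k\<ge>N. (if 1 < norm x \<and> norm x < real k then min (h x) (real k) else 0)
                 = (if 1 < norm x then h x else 0)"
proof -
  obtain N :: nat where N: "max (h x) (norm x) < real N" using reals_Archimedean2 by blast
  show ?thesis
  proof (intro exI allI impI)
    fix k assume "N \<le> k"
    then have "real N \<le> real k" by simp
    with N show "(if 1 < norm x \<and> norm x < real k then min (h x) (real k) else 0)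
                 = (if 1 < norm x then h x else 0)" by auto
  qed
qed

lemma w_det_cancel:
  fixes x :: "real ^ 'n"
  assumes x: "1 < norm x"
  shows "\<bar>det (matrix (Dinv x))\<bar> * norm (inv0 x) powr (- 2 * real CARD('n)) = 1"
proof -
  have x0: "x \<noteq> 0" using x by auto
  have p: "0 < norm x" using x0 by simp
  have "norm (inv0 x) powr (- 2 * real CARD('n)) = 1 / (norm x powr (- 2 * real CARD('n)))"
    using p by (simp add: norm_inv0 powr_divide)
  then show ?thesis using det_Dinv[OF x0] p by simp
qed

lemma cov_main:
  fixes h :: "real ^ 'n::{finite,wellorder} \<Rightarrow> real"
  assumes nn: "\<And>x. 0 \<le> h x"
    and meas: "(\<lambda>x. if 1 < norm x then h x else 0) \<in> borel_measurable lebesgue"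
  shows "(\<lambda>t. if t \<in> ball 0 1 - {0} then norm t powr (- 2 * real CARD('n)) * h (inv0 t) else 0)
            \<in> borel_measurable lebesgue"
    and "(\<integral>\<^sup>+x. ennreal (if 1 < norm x then h x else 0) \<partial>lebesgue)
         \<le> (\<integral>\<^sup>+t. ennreal (if t \<in> ball 0 1 - {0} then norm t powr (- 2 * real CARD('n)) * h (inv0 t) else 0) \<partial>lebesgue)"
proof -
  define T :: "(real ^ 'n::{finite,wellorder}) set" where "T = {x. 1 < norm x}"
  define S :: "(real ^ 'n::{finite,wellorder}) set" where "S = ball 0 1 - {0}"
  define w :: "real ^ 'n::{finite,wellorder} \<Rightarrow> real" where "w t = norm t powr (- 2 * real CARD('n))" for t
  define H where "H x = (if 1 < norm x then h x else 0)" for x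
  define G where "G t = (if t \<in> S then w t * h (inv0 t) else 0)" for t
  define hk where "hk k x = (if 1 < norm x \<and> norm x < real k then min (h x) (real k) else 0)" for k :: nat and x
  define F where "F k t = w t * hk k (inv0 t)" for k t
  define Gk where "Gk k t = (if t \<in> S then F k t else 0)" for k t
  have w0: "0 \<le> w t" for t by (simp add: w_def)
  have hk0: "0 \<le> hk k x" for k x using nn by (simp add: hk_def)
  have hk_le: "hk k x \<le> h x" for k x using nn by (simp add: hk_def)
  have invS: "inv0 ` S = T"
  proof
    show "inv0 ` S \<subseteq> T"
      by (auto simp: S_def T_def norm_inv0 inv0_zero_iff)
    show "T \<subseteq> inv0 ` S"
    proof
      fix y assume "y \<in> T"
      then have "inv0 y \<in> S" "y = inv0 (inv0 y)"
        by (auto simp: S_def T_def norm_inv0 inv0_inv0 divide_less_eq inv0_zero_iff)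
      then show "y \<in> inv0 ` S" by blast
    qed
  qed
  have invT: "inv0 ` T = S"
  proof -
    have "inv0 ` T = inv0 ` inv0 ` S" using invS by simp
    also have "\<dots> = S" by (simp add: image_image inv0_inv0)
    finally show ?thesis .
  qed
  have hk_meas: "hk k \<in> borel_measurable lebesgue" for k
  proof -
    have [measurable]: "ball 0 (real k) \<in> sets (lebesgue :: (real ^ 'n::{finite,wellorder}) measure)"
      by (simp add: sets.Int_space_eq1 fmeasurableD)
    have "hk k = (\<lambda>x. min (H x) (real k) * indicator (ball 0 (real k)) x)"
      by (auto simp: fun_eq_iff hk_def H_def indicator_def)
    also have "\<dots> \<in> borel_measurable lebesgue"
      using meas unfolding H_def[abs_def] by measurable
    finally show ?thesis .
  qed
  have hk_int: "integrable lebesgue (hk k)" for k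
    by (rule int_bounded_ball[where c="real k" and r="real k", OF hk_meas hk0]) (auto simp: hk_def indicator_def)
  define I where "I k = integral\<^sup>L lebesgue (hk k)" for k
  have hkI: "(hk k has_integral I k) UNIV" for k
    unfolding I_def by (rule has_integral_integral_lebesgue[OF hk_int])
  have hk_restr: "(\<lambda>x. if x \<in> T then hk k x else 0) = hk k" for k
    by (auto simp: fun_eq_iff hk_def T_def)
  have hkT: "(hk k has_integral I k) T" for k
  proof -
    have "((\<lambda>x. if x \<in> T then hk k x else 0) has_integral I k) UNIV"
      using hkI[of k] by (simp only: hk_restr)
    then show ?thesis by (simp only: has_integral_restrict_UNIV)
  qed
  have der: "\<And>x. x \<in> A \<Longrightarrow> x \<noteq> 0 \<Longrightarrow> (inv0 has_derivative Dinv x) (at x within A)" for A :: "(real^'n::{finite,wellorder}) set"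
    by (rule inv0_has_derivative)
  have T0: "x \<in> T \<Longrightarrow> x \<noteq> 0" for x by (auto simp: T_def)
  have S0: "x \<in> S \<Longrightarrow> x \<noteq> 0" for x by (auto simp: S_def)
  have invT': "x \<in> S \<Longrightarrow> inv0 x \<in> T" for x using invS by blast
  have FS: "F k integrable_on S" for k
  proof -
    have "F k integrable_on (inv0 ` T)"
    proof (rule integral_on_image_ubound_nonneg[THEN conjunct1])
      show "0 \<le> F k (inv0 x)" if "x \<in> T" for x using w0 hk0 by (simp add: F_def)
      show "(inv0 has_derivative Dinv x) (at x within T)" if "x \<in> T" for x
        using der T0 that by blast
      show "(\<lambda>x. \<bar>det (matrix (Dinv x))\<bar> * F k (inv0 x)) integrable_on T"
      proof (rule integrable_eq)
        show "hk k integrable_on T" using hkT by blast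
        fix x assume "x \<in> T"
        then show "hk k x = \<bar>det (matrix (Dinv x))\<bar> * F k (inv0 x)"
          using w_det_cancel[of x] by (simp add: F_def w_def inv0_inv0 T_def mult.assoc[symmetric])
      qed
    qed
    then show ?thesis using invT by simp
  qed
  have detS: "\<bar>det (matrix (Dinv t))\<bar> * hk k (inv0 t) = F k t" if "t \<in> S" for k t
    using det_Dinv[OF S0[OF that]] by (simp add: F_def w_def)
  have le: "integral T (hk k) \<le> integral S (F k)" for k
  proof -
    have "integral (inv0 ` S) (hk k) \<le> integral S (\<lambda>t. \<bar>det (matrix (Dinv t))\<bar> * hk k (inv0 t))"
    proof (rule integral_on_image_ubound_nonneg[THEN conjunct2])
      show "0 \<le> hk k (inv0 x)" if "x \<in> S" for x using hk0 by simp
      show "(inv0 has_derivative Dinv x) (at x within S)" if "x \<in> S" for x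
        using der S0 that by blast
      show "(\<lambda>t. \<bar>det (matrix (Dinv t))\<bar> * hk k (inv0 t)) integrable_on S"
        using FS[of k] by (rule integrable_eq) (simp add: detS)
    qed
    also have "\<dots> = integral S (F k)" by (rule integral_cong) (simp add: detS)
    finally show ?thesis using invS by simp
  qed
  have nnT: "(\<integral>\<^sup>+x. ennreal (hk k x) \<partial>lebesgue) = ennreal (integral T (hk k))" for k
  proof -
    have "integral T (hk k) = I k" using hkT by blast
    then show ?thesis using hkI[of k] hk0 by (subst (asm) has_integral_iff_nn_integral_lebesgue) auto
  qed
  have GkI: "(Gk k has_integral integral S (F k)) UNIV" for k
    using integrable_integral[OF FS[of k]] unfolding Gk_def by (simp add: has_integral_restrict_UNIV)
  have Gk0: "0 \<le> Gk k t" for k t using w0 hk0 by (simp add: Gk_def F_def)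
  have Gk_meas: "Gk k \<in> borel_measurable lebesgue" for k
    using GkI[of k] Gk0 by (subst (asm) has_integral_iff_nn_integral_lebesgue) auto
  have nnS: "(\<integral>\<^sup>+x. ennreal (Gk k x) \<partial>lebesgue) = ennreal (integral S (F k))" for k
    using GkI[of k] Gk0 by (subst (asm) has_integral_iff_nn_integral_lebesgue) auto
  have Gk_le: "(\<integral>\<^sup>+x. ennreal (Gk k x) \<partial>lebesgue) \<le> (\<integral>\<^sup>+x. ennreal (G x) \<partial>lebesgue)" for k
    by (intro nn_integral_mono ennreal_leI)
       (auto simp: Gk_def G_def F_def intro!: mult_left_mono hk_le w0)
  have step: "(\<integral>\<^sup>+x. ennreal (hk k x) \<partial>lebesgue) \<le> (\<integral>\<^sup>+x. ennreal (G x) \<partial>lebesgue)" for k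
    using le[of k] Gk_le[of k] by (simp add: nnT nnS) (meson ennreal_leI order_trans)
  have lim: "(\<lambda>k. \<integral>\<^sup>+x. ennreal (hk k x) \<partial>lebesgue) \<longlonglongrightarrow> (\<integral>\<^sup>+x. ennreal (H x) \<partial>lebesgue)"
  proof (rule nn_integral_LIMSEQ)
    show "incseq (\<lambda>k x. ennreal (hk k x))"
      by (auto simp: incseq_def le_fun_def hk_def intro!: ennreal_leI)
    show "(\<lambda>x. ennreal (hk k x)) \<in> borel_measurable lebesgue" for k
      using hk_meas by measurable
    fix x
    obtain N where "\<forall>k\<ge>N. hk k x = H x" using hk_eventually[of x h] unfolding hk_def H_def by blast
    then show "(\<lambda>k. ennreal (hk k x)) \<longlonglongrightarrow> ennreal (H x)"
      by (intro tendsto_eventually) (auto simp: eventually_sequentially intro!: exI[of _ N])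
  qed
  have "(\<integral>\<^sup>+x. ennreal (H x) \<partial>lebesgue) \<le> (\<integral>\<^sup>+x. ennreal (G x) \<partial>lebesgue)"
    using lim step by (intro LIMSEQ_le_const2) auto
  then show "(\<integral>\<^sup>+x. ennreal (if 1 < norm x then h x else 0) \<partial>lebesgue)
         \<le> (\<integral>\<^sup>+t. ennreal (if t \<in> ball 0 1 - {0} then norm t powr (- 2 * real CARD('n)) * h (inv0 t) else 0) \<partial>lebesgue)"
    unfolding H_def G_def S_def w_def by simp
  have "G \<in> borel_measurable lebesgue"
  proof (rule borel_measurable_LIMSEQ_real[OF _ Gk_meas])
    fix t
    show "(\<lambda>k. Gk k t) \<longlonglongrightarrow> G t"
    proof (cases "t \<in> S")
      case True
      then have "1 < norm (inv0 t)" using invT' by (simp add: T_def)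
      obtain N where "\<forall>k\<ge>N. hk k (inv0 t) = H (inv0 t)"
        using hk_eventually[of "inv0 t" h] unfolding hk_def H_def by blast
      then show ?thesis using True \<open>1 < norm (inv0 t)\<close>
        by (intro tendsto_eventually) (auto simp: eventually_sequentially Gk_def G_def F_def H_def intro!: exI[of _ N])
    next
      case False
      then show ?thesis by (simp add: Gk_def G_def)
    qed
  qed
  then show "(\<lambda>t. if t \<in> ball 0 1 - {0} then norm t powr (- 2 * real CARD('n)) * h (inv0 t) else 0)
            \<in> borel_measurable lebesgue"
    unfolding G_def[abs_def] S_def w_def by simp
qed

lemma card_bidx: "CARD('a::euclidean_space bidx) = DIM('a)"
proof -
  have "card (UNIV :: 'a bidx set) = card (Rep_bidx ` (UNIV :: 'a bidx set))"
    by (rule card_image[symmetric]) (rule inj_on_subset[OF inj_Rep_bidx subset_UNIV])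
  then show ?thesis by (simp add: Rep_bidx_image)
qed

lemma phi_inv0: "phi (inv0 x) = inv0 (phi x)"
  unfolding inv0_def by (simp add: phi_def scaleR_sum_right norm_phi[unfolded phi_def])

lemma phi_zero_iff: "phi x = 0 \<longleftrightarrow> x = 0"
  by (metis norm_eq_zero norm_phi)

lemma psi_zero_iff: "psi x = 0 \<longleftrightarrow> x = 0"
  by (metis norm_eq_zero norm_psi)

lemma psi_phi_lebesgue:
  shows "(phi :: real ^ ('a::euclidean_space bidx) \<Rightarrow> 'a) \<in> lebesgue \<rightarrow>\<^sub>M lebesgue"
    and "(psi :: 'a::euclidean_space \<Rightarrow> _) \<in> lebesgue \<rightarrow>\<^sub>M lebesgue"
    and "distr lebesgue lebesgue (phi :: real ^ ('a::euclidean_space bidx) \<Rightarrow> 'a) = lebesgue"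
  using lb_lebesgue[OF linear_phi bij_phi] lb_lebesgue[OF linear_psi bij_psi] by auto

lemma nn_transfer:
  fixes g :: "'a::euclidean_space \<Rightarrow> ennreal"
  assumes "g \<in> borel_measurable lebesgue"
  shows "(\<integral>\<^sup>+x. g x \<partial>lebesgue) = (\<integral>\<^sup>+y. g (phi y) \<partial>(lebesgue :: (real ^ ('a bidx)) measure))"
proof -
  have "(\<integral>\<^sup>+x. g x \<partial>lebesgue) = (\<integral>\<^sup>+x. g x \<partial>distr lebesgue lebesgue (phi :: real ^ ('a bidx) \<Rightarrow> 'a))"
    by (simp add: psi_phi_lebesgue(3))
  also have "\<dots> = (\<integral>\<^sup>+y. g (phi y) \<partial>(lebesgue :: (real ^ ('a bidx)) measure))"
    by (rule nn_integral_distr[OF psi_phi_lebesgue(1)]) (simp add: psi_phi_lebesgue(3) assms)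
  finally show ?thesis .
qed

lemma M_nonneg: "0 \<le> t \<Longrightarrow> 0 \<le> orlicz_M t"
  unfolding orlicz_M_def by (intro mult_nonneg_nonneg) (auto intro!: ln_ge_zero simp: add_increasing2[of t 1 "exp 1"] one_le_exp_iff)

lemma M_scale:
  assumes s: "1 \<le> s" and a: "0 \<le> a"
  shows "s * orlicz_M a \<le> orlicz_M (s * a)"
proof -
  have pos: "0 < exp 1 + a" using a by (simp add: add_pos_nonneg)
  have "a \<le> s * a" using s a by (simp add: mult_le_cancel_right1)
  then have "ln (exp 1 + a) \<le> ln (exp 1 + s * a)" using pos by simp
  moreover have "0 \<le> s * a" using s a by simp
  ultimately have "(s * a) * ln (exp 1 + a) \<le> (s * a) * ln (exp 1 + s * a)"
    by (rule mult_left_mono)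
  then show ?thesis by (simp add: orlicz_M_def mult.assoc)
qed

lemma powr_ge1:
  fixes t :: "'a::real_normed_vector"
  assumes "norm t < 1" "t \<noteq> 0"
  shows "1 \<le> norm t powr (- 2 * real DIM('b::euclidean_space))"
proof -
  have "norm t powr 0 \<le> norm t powr (- 2 * real DIM('b))"
    by (rule powr_mono') (use assms in auto)
  then show ?thesis using assms by simp
qed

lemma key_ineq:
  fixes f :: "'a::euclidean_space \<Rightarrow> real" and l :: real
  assumes fm: "f \<in> borel_measurable (lebesgue_on (- ball 0 1))" and l: "0 < l"
  shows "(\<integral>\<^sup>+ x \<in> - ball 0 1. ennreal (orlicz_M (\<bar>f x\<bar> / l)) \<partial>lebesgue)
       \<le> (\<integral>\<^sup>+ x \<in> ball 0 1. ennreal (orlicz_M (\<bar>kelvinV f x\<bar> / l)) \<partial>lebesgue)"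
proof -
  define hA where "hA = (\<lambda>x. orlicz_M (\<bar>f x\<bar> / l))"
  define HA where "HA = (\<lambda>x. if 1 < norm x then hA x else 0)"
  define GA where "GA = (\<lambda>t. if t \<in> ball 0 1 - {0} then norm t powr (- 2 * real DIM('a)) * hA (inv0 t) else 0)"
  define hN where "hN = (\<lambda>y::real ^ ('a bidx). hA (phi y))"
  have hA0: "0 \<le> hA x" for x using l by (simp add: hA_def M_nonneg)
  have F0: "(\<lambda>x. indicator (- ball 0 1) x *\<^sub>R f x) \<in> borel_measurable (lebesgue :: 'a measure)"
    using fm by (subst (asm) borel_measurable_restrict_space_iff) auto
  have HA_eq: "HA = (\<lambda>x. indicator {x. 1 < norm x} x * orlicz_M (\<bar>indicator (- ball 0 1) x *\<^sub>R f x\<bar> / l))"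
    by (auto simp: fun_eq_iff HA_def hA_def indicator_def)
  have [measurable]: "{x::'a. 1 < norm x} \<in> sets lebesgue"
  proof -
    have "open {x::'a. 1 < norm x}" by (intro open_Collect_less continuous_intros)
    then show ?thesis by simp
  qed
  have HA_meas: "HA \<in> borel_measurable lebesgue"
    unfolding HA_eq orlicz_M_def using F0 by measurable
  have "(\<integral>\<^sup>+ x \<in> - ball 0 1. ennreal (hA x) \<partial>lebesgue) = (\<integral>\<^sup>+ x. ennreal (HA x) \<partial>lebesgue)"
  proof (rule nn_integral_cong_AE)
    have "sphere (0::'a) 1 \<in> null_sets lebesgue"
      using negligible_sphere negligible_iff_null_sets by blast
    then show "AE x in lebesgue. ennreal (hA x) * indicator (- ball 0 1) x = ennreal (HA x)"
      by (rule AE_I') (auto simp: HA_def indicator_def)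
  qed
  also have "\<dots> = (\<integral>\<^sup>+ y. ennreal (HA (phi y)) \<partial>(lebesgue :: (real ^ ('a bidx)) measure))"
    by (rule nn_transfer) (use HA_meas in measurable)
  also have "\<dots> = (\<integral>\<^sup>+ y. ennreal (if 1 < norm y then hN y else 0) \<partial>lebesgue)"
    unfolding HA_def hN_def by (simp add: norm_phi)
  also have "\<dots> \<le> (\<integral>\<^sup>+ t. ennreal (if t \<in> ball 0 1 - {0} then norm t powr (- 2 * real CARD('a bidx)) * hN (inv0 t) else 0) \<partial>lebesgue)"
  proof (rule cov_main(2))
    show "0 \<le> hN x" for x by (simp add: hN_def hA0)
    have "(\<lambda>y. HA (phi y)) \<in> borel_measurable lebesgue"
      using measurable_comp[OF psi_phi_lebesgue(1) HA_meas] by (simp add: comp_def)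
    then show "(\<lambda>x. if 1 < norm x then hN x else 0) \<in> borel_measurable lebesgue"
      unfolding HA_def hN_def by (simp add: norm_phi)
  qed
  also have "\<dots> = (\<integral>\<^sup>+ t. ennreal (GA (phi t)) \<partial>lebesgue)"
    by (intro nn_integral_cong arg_cong[where f=ennreal])
       (simp add: GA_def hN_def card_bidx norm_phi phi_inv0 phi_zero_iff)
  also have "\<dots> = (\<integral>\<^sup>+ t. ennreal (GA t) \<partial>lebesgue)"
  proof (rule nn_transfer[symmetric])
    define GN where "GN = (\<lambda>t::real ^ ('a bidx). if t \<in> ball 0 1 - {0} then norm t powr (- 2 * real CARD('a bidx)) * hN (inv0 t) else 0)"
    have "GN \<in> borel_measurable lebesgue"
      unfolding GN_def
    proof (rule cov_main(1))
      show "0 \<le> hN x" for x by (simp add: hN_def hA0)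
      have "(\<lambda>y. HA (phi y)) \<in> borel_measurable lebesgue"
        using measurable_comp[OF psi_phi_lebesgue(1) HA_meas] by (simp add: comp_def)
      then show "(\<lambda>x. if 1 < norm x then hN x else 0) \<in> borel_measurable lebesgue"
        unfolding HA_def hN_def by (simp add: norm_phi)
    qed
    then have "(\<lambda>t. GN (psi t)) \<in> borel_measurable lebesgue"
      using measurable_comp[OF psi_phi_lebesgue(2)] by (simp add: comp_def)
    moreover have "(\<lambda>t. GN (psi t)) = GA"
    proof
      fix t :: 'a
      have "phi (psi t) = t" by (rule phi_psi)
      then show "GN (psi t) = GA t"
        unfolding GN_def GA_def hN_def
        by (simp add: card_bidx norm_psi phi_inv0 psi_zero_iff phi_psi)
    qed
    ultimately show "(\<lambda>t. ennreal (GA t)) \<in> borel_measurable lebesgue" by simp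
  qed
  also have "\<dots> \<le> (\<integral>\<^sup>+ x \<in> ball 0 1. ennreal (orlicz_M (\<bar>kelvinV f x\<bar> / l)) \<partial>lebesgue)"
  proof (rule nn_integral_mono)
    fix t :: 'a
    show "ennreal (GA t) \<le> ennreal (orlicz_M (\<bar>kelvinV f t\<bar> / l)) * indicator (ball 0 1) t"
    proof (cases "t \<in> ball 0 1 - {0}")
      case True
      let ?s = "norm t powr (- 2 * real DIM('a))"
      have s1: "1 \<le> ?s" using True by (intro powr_ge1) auto
      have "\<bar>kelvinV f t\<bar> / l = ?s * (\<bar>f (inv0 t)\<bar> / l)"
        by (simp add: kelvinV_def inv0_def abs_mult)
      then have "GA t \<le> orlicz_M (\<bar>kelvinV f t\<bar> / l)"
        using True M_scale[OF s1, of "\<bar>f (inv0 t)\<bar> / l"] l by (simp add: GA_def hA_def)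
      then show ?thesis using True by (simp add: ennreal_leI)
    next
      case False
      then have "GA t = 0" unfolding GA_def by auto
      then show ?thesis by simp
    qed
  qed
  finally show ?thesis by (simp add: hA_def)
qed

theorem lemmaA2:
  fixes f :: "'a::euclidean_space \<Rightarrow> real"
  assumes "f \<in> borel_measurable (lebesgue_on (- ball 0 1))"
  shows "luxemburg_norm orlicz_M (- ball 0 1) f \<le> luxemburg_norm orlicz_M (ball 0 1) (kelvinV f)"
  unfolding luxemburg_norm_def
proof (rule Inf_superset_mono)
  show "{ennreal l |l. 0 < l \<and> (\<integral>\<^sup>+ x \<in> ball 0 1. ennreal (orlicz_M (\<bar>kelvinV f x\<bar> / l)) \<partial>lebesgue) \<le> 1}
        \<subseteq> {ennreal l |l. 0 < l \<and> (\<integral>\<^sup>+ x \<in> - ball 0 1. ennreal (orlicz_M (\<bar>f x\<bar> / l)) \<partial>lebesgue) \<le> 1}"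
    using key_ineq[OF assms] by (blast intro: order_trans)
qed

end
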